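(* Let $f:\mathbb{R}^d\to\mathbb{R}$ be smooth, let $K\subseteq\mathbb{R}^d$ be compact and let $M=(M_k)$ be a positive sequence. The following are equivalent: (1) there exist $C,\rho>0$ such that $|d_v^kf(x)|\le C\rho^kk!\,M_k$ for all $k\in\mathbb{N}$, $x\in K$, $v\in S^{d-1}$; (2) there exist $v_0\in S^{d-1}$ and $r>0$, and $C,\rho>0$, such that $|d_v^kf(x)|\le C\rho^kk!\,M_k$ for all $k\in\mathbb{N}$, $x\in K$, $v\in B(v_0,r)\cap S^{d-1}$; (3) there exist $C,\rho>0$ such that $|\partial^\alpha f(x)|\le C\rho^{|\alpha|}|\alpha|!\,M_{|\alpha|}$ for all $x\in K$, $\alpha\in\mathbb{N}^d$. The constants $C,\rho$ may differ from item to item, but they change in a uniform way which depends only on $r$.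
   Context: $d_v^kf$ denotes the $k$-th directional derivative of $f$ in direction $v$; $S^{d-1}$ is the unit sphere and $B(v_0,r)$ the open Euclidean ball of radius $r$ centered at $v_0$. *)

theory Defs
  imports "HOL-Analysis.Analysis"
begin

definition dir_deriv :: "(real^'n \<Rightarrow> real) \<Rightarrow> real^'n \<Rightarrow> real^'n \<Rightarrow> real" where
  "dir_deriv g v x = deriv (\<lambda>t. g (x + t *\<^sub>R v)) 0"

definition partial :: "'n::finite \<Rightarrow> (real^'n \<Rightarrow> real) \<Rightarrow> real^'n \<Rightarrow> real" where
  "partial i g = dir_deriv g (axis i 1)"

definition iter_partial :: "'n::finite list \<Rightarrow> (real^'n \<Rightarrow> real) \<Rightarrow> real^'n \<Rightarrow> real" where
  "iter_partial is g = foldr partial is g"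

definition smooth :: "(real^'n::finite \<Rightarrow> real) \<Rightarrow> bool" where
  "smooth f \<longleftrightarrow> (\<forall>is. continuous_on UNIV (iter_partial is f) \<and>
      (\<forall>i x. (\<lambda>t. iter_partial is f (x + t *\<^sub>R axis i 1)) differentiable (at 0)))"

definition dir_deriv_k :: "nat \<Rightarrow> (real^'n \<Rightarrow> real) \<Rightarrow> real^'n \<Rightarrow> real^'n \<Rightarrow> real" where
  "dir_deriv_k k f v x = (deriv ^^ k) (\<lambda>t. f (x + t *\<^sub>R v)) 0"

text \<open>Multi-index partial derivative \<partial>^\<alpha> f, computed along some list of indices in which
  each coordinate i occurs exactly \<alpha> i times (for smooth f the order is irrelevant).\<close>
definition partial_alpha :: "('n::finite \<Rightarrow> nat) \<Rightarrow> (real^'n \<Rightarrow> real) \<Rightarrow> real^'n \<Rightarrow> real" where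
  "partial_alpha \<alpha> f = iter_partial (SOME is. \<forall>i. count_list is i = \<alpha> i) f"

definition mi_abs :: "('n::finite \<Rightarrow> nat) \<Rightarrow> nat" where
  "mi_abs \<alpha> = (\<Sum>i\<in>UNIV. \<alpha> i)"

definition cond1 :: "(real^'n::finite \<Rightarrow> real) \<Rightarrow> (real^'n) set \<Rightarrow> (nat \<Rightarrow> real) \<Rightarrow> real \<Rightarrow> real \<Rightarrow> bool" where
  "cond1 f K M C \<rho> \<longleftrightarrow> C > 0 \<and> \<rho> > 0 \<and>
     (\<forall>k. \<forall>x\<in>K. \<forall>v\<in>sphere 0 1. \<bar>dir_deriv_k k f v x\<bar> \<le> C * \<rho> ^ k * fact k * M k)"

definition cond2 :: "(real^'n::finite \<Rightarrow> real) \<Rightarrow> (real^'n) set \<Rightarrow> (nat \<Rightarrow> real) \<Rightarrow> real^'n \<Rightarrow> real \<Rightarrow> real \<Rightarrow> real \<Rightarrow> bool" where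
  "cond2 f K M v0 r C \<rho> \<longleftrightarrow> v0 \<in> sphere 0 1 \<and> r > 0 \<and> C > 0 \<and> \<rho> > 0 \<and>
     (\<forall>k. \<forall>x\<in>K. \<forall>v\<in>ball v0 r \<inter> sphere 0 1. \<bar>dir_deriv_k k f v x\<bar> \<le> C * \<rho> ^ k * fact k * M k)"

definition cond3 :: "(real^'n::finite \<Rightarrow> real) \<Rightarrow> (real^'n) set \<Rightarrow> (nat \<Rightarrow> real) \<Rightarrow> real \<Rightarrow> real \<Rightarrow> bool" where
  "cond3 f K M C \<rho> \<longleftrightarrow> C > 0 \<and> \<rho> > 0 \<and>
     (\<forall>x\<in>K. \<forall>\<alpha>. \<bar>partial_alpha \<alpha> f x\<bar> \<le> C * \<rho> ^ mi_abs \<alpha> * fact (mi_abs \<alpha>) * M (mi_abs \<alpha>))"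

end

theory Submission
  imports Defs
begin


lemma iter_partial_Nil[simp]: "iter_partial [] g = g"
  by (simp add: iter_partial_def)

lemma iter_partial_Cons[simp]: "iter_partial (i # is) g = partial i (iter_partial is g)"
  by (simp add: iter_partial_def)

lemma iter_partial_append: "iter_partial (xs @ ys) g = iter_partial xs (iter_partial ys g)"
  by (simp add: iter_partial_def)

lemma smooth_iter: "smooth g \<Longrightarrow> smooth (iter_partial js g)"
  unfolding smooth_def by (simp add: iter_partial_append[symmetric])

lemma smooth_partial: "smooth g \<Longrightarrow> smooth (partial i g)"
  using smooth_iter[of g "[i]"] by simp

lemma smooth_cont: "smooth g \<Longrightarrow> continuous_on UNIV g"
  unfolding smooth_def by (metis iter_partial_Nil)

lemma partial_shift:
  assumes "smooth g"
  shows "((\<lambda>s. g (w + s *\<^sub>R axis i 1)) has_real_derivative partial i g (w + s0 *\<^sub>R axis i 1)) (at s0)"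
proof -
  let ?z = "w + s0 *\<^sub>R axis i 1"
  have "(\<lambda>t. g (?z + t *\<^sub>R axis i 1)) differentiable (at 0)"
    using assms unfolding smooth_def by (metis iter_partial_Nil)
  hence "((\<lambda>t. g (?z + t *\<^sub>R axis i 1)) has_real_derivative partial i g ?z) (at 0)"
    unfolding partial_def dir_deriv_def by (simp add: DERIV_deriv_iff_real_differentiable)
  hence "((\<lambda>t. g (w + (t + s0) *\<^sub>R axis i 1)) has_real_derivative partial i g ?z) (at 0)"
    by (simp add: algebra_simps)
  thus ?thesis using DERIV_shift[of "\<lambda>s. g (w + s *\<^sub>R axis i 1)" _ 0 s0] by simp
qed



lemma mixed_mvt:
  assumes "smooth g" "h > 0"
  shows "\<exists>p. norm (p - y) < 2*h \<and>
    g (y + h *\<^sub>R axis i 1 + h *\<^sub>R axis j 1) - g (y + h *\<^sub>R axis i 1) - g (y + h *\<^sub>R axis j 1) + g y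
      = h^2 * partial j (partial i g) p"
proof -
  let ?ei = "axis i (1::real)" and ?ej = "axis j (1::real)"
  define \<phi> where "\<phi> s = g (y + h *\<^sub>R ?ej + s *\<^sub>R ?ei) - g (y + s *\<^sub>R ?ei)" for s
  have d\<phi>: "(\<phi> has_real_derivative (partial i g (y + h *\<^sub>R ?ej + s *\<^sub>R ?ei) - partial i g (y + s *\<^sub>R ?ei))) (at s)" for s
    unfolding \<phi>_def
    by (intro DERIV_diff partial_shift assms(1))
  obtain \<xi> where \<xi>: "0 < \<xi>" "\<xi> < h"
    "\<phi> h - \<phi> 0 = (h - 0) * (partial i g (y + h *\<^sub>R ?ej + \<xi> *\<^sub>R ?ei) - partial i g (y + \<xi> *\<^sub>R ?ei))"
    using MVT2[OF assms(2) d\<phi>] by blast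
  define \<psi> where "\<psi> s = partial i g (y + \<xi> *\<^sub>R ?ei + s *\<^sub>R ?ej)" for s
  have d\<psi>: "(\<psi> has_real_derivative partial j (partial i g) (y + \<xi> *\<^sub>R ?ei + s *\<^sub>R ?ej)) (at s)" for s
    unfolding \<psi>_def by (intro partial_shift smooth_partial assms(1))
  obtain \<eta> where \<eta>: "0 < \<eta>" "\<eta> < h"
    "\<psi> h - \<psi> 0 = (h - 0) * partial j (partial i g) (y + \<xi> *\<^sub>R ?ei + \<eta> *\<^sub>R ?ej)"
    using MVT2[OF assms(2) d\<psi>] by blast
  define p where "p = y + \<xi> *\<^sub>R ?ei + \<eta> *\<^sub>R ?ej"
  have "norm (p - y) \<le> norm (\<xi> *\<^sub>R ?ei) + norm (\<eta> *\<^sub>R ?ej)"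
    unfolding p_def by (metis add_diff_cancel_left' add.assoc norm_triangle_ineq)
  also have "\<dots> = \<xi> + \<eta>" using \<xi> \<eta> by (simp add: norm_axis_1)
  finally have np: "norm (p - y) < 2*h" using \<xi> \<eta> by simp
  have "\<phi> h - \<phi> 0 = h * (\<psi> h - \<psi> 0)"
    using \<xi>(3) unfolding \<psi>_def by (simp add: algebra_simps)
  also have "\<dots> = h^2 * partial j (partial i g) p"
    using \<eta>(3) unfolding p_def by (simp add: power2_eq_square)
  finally have "\<phi> h - \<phi> 0 = h^2 * partial j (partial i g) p" .
  moreover have "\<phi> h - \<phi> 0 = g (y + h *\<^sub>R ?ei + h *\<^sub>R ?ej) - g (y + h *\<^sub>R ?ei) - g (y + h *\<^sub>R ?ej) + g y"
    unfolding \<phi>_def by (simp add: algebra_simps)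
  ultimately show ?thesis using np by metis
qed

lemma clairaut_pt:
  assumes "smooth g"
  shows "partial i (partial j g) y = partial j (partial i g) y"
proof (rule ccontr)
  let ?A = "partial i (partial j g)" and ?B = "partial j (partial i g)"
  assume ne: "?A y \<noteq> ?B y"
  define e where "e = \<bar>?A y - ?B y\<bar> / 2"
  have e: "e > 0" using ne by (simp add: e_def)
  have cA: "isCont ?A y"
    using smooth_cont[OF smooth_partial[OF smooth_partial[OF assms]]]
    by (simp add: continuous_on_eq_continuous_at)
  have cB: "isCont ?B y"
    using smooth_cont[OF smooth_partial[OF smooth_partial[OF assms]]]
    by (simp add: continuous_on_eq_continuous_at)
  obtain d1 where d1: "d1 > 0" "\<And>x. dist x y < d1 \<Longrightarrow> dist (?A x) (?A y) < e"
    using cA e unfolding continuous_at_eps_delta by blast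
  obtain d2 where d2: "d2 > 0" "\<And>x. dist x y < d2 \<Longrightarrow> dist (?B x) (?B y) < e"
    using cB e unfolding continuous_at_eps_delta by blast
  define h where "h = min d1 d2 / 2"
  have h: "h > 0" using d1 d2 by (simp add: h_def)
  obtain p where p: "norm (p - y) < 2*h"
    "g (y + h *\<^sub>R axis i 1 + h *\<^sub>R axis j 1) - g (y + h *\<^sub>R axis i 1) - g (y + h *\<^sub>R axis j 1) + g y
      = h^2 * ?B p"
    using mixed_mvt[OF assms h, of y i j] by blast
  obtain q where q: "norm (q - y) < 2*h"
    "g (y + h *\<^sub>R axis j 1 + h *\<^sub>R axis i 1) - g (y + h *\<^sub>R axis j 1) - g (y + h *\<^sub>R axis i 1) + g y
      = h^2 * ?A q"
    using mixed_mvt[OF assms h, of y j i] by blast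
  have "h^2 * ?B p = h^2 * ?A q" using p(2) q(2) by (simp add: algebra_simps)
  hence BA: "?B p = ?A q" using h by simp
  have "dist (?A q) (?A y) < e" using d1(2)[of q] q(1) by (simp add: dist_norm h_def)
  moreover have "dist (?B p) (?B y) < e" using d2(2)[of p] p(1) by (simp add: dist_norm h_def)
  ultimately have "\<bar>?A y - ?B y\<bar> < 2 * e" using BA by (simp add: dist_real_def)
  thus False by (simp add: e_def)
qed

lemma clairaut:
  assumes "smooth g"
  shows "partial i (partial j g) = partial j (partial i g)"
  using clairaut_pt[OF assms] by blast



lemma chain_S:
  assumes g: "smooth g" and S: "finite S"
  shows "\<forall>x v. (\<forall>i. i \<notin> S \<longrightarrow> v$i = 0) \<longrightarrow>
    ((\<lambda>t. g (x + t *\<^sub>R v)) has_real_derivative (\<Sum>i\<in>S. v$i * partial i g x)) (at 0)"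
  using S
proof (induction S rule: finite_induct)
  case empty
  show ?case
  proof (intro allI impI)
    fix x and v :: "real^'a"
    assume "\<forall>i. i \<notin> {} \<longrightarrow> v$i = 0"
    hence "v = 0" by (simp add: vec_eq_iff)
    thus "((\<lambda>t. g (x + t *\<^sub>R v)) has_real_derivative (\<Sum>i\<in>{}. v$i * partial i g x)) (at 0)"
      by simp
  qed
next
  case (insert a S)
  show ?case
  proof (intro allI impI)
    fix x and v :: "real^'a"
    assume v: "\<forall>i. i \<notin> insert a S \<longrightarrow> v$i = 0"
    let ?ea = "axis a (1::real)"
    define v' where "v' = v - (v$a) *\<^sub>R ?ea"
    have v'c: "v'$i = (if i = a then 0 else v$i)" for i
      by (simp add: v'_def axis_def)
    have v'S: "\<forall>i. i \<notin> S \<longrightarrow> v'$i = 0" using v by (simp add: v'c)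
    define Dv where "Dv = (\<Sum>i\<in>S. v'$i * partial i g x)"
    have IH: "((\<lambda>t. g (x + t *\<^sub>R v')) has_real_derivative Dv) (at 0)"
      using insert.IH v'S unfolding Dv_def by blast
    define P where "P = (\<lambda>(t1::real,t2::real). partial a g (x + t1 *\<^sub>R v' + t2 *\<^sub>R ?ea))"
    define F where "F = (\<lambda>t1 t2::real. g (x + t1 *\<^sub>R v' + t2 *\<^sub>R ?ea))"
    have fx: "((\<lambda>t1. F t1 0) has_derivative (\<lambda>h. Dv * h)) (at 0 within UNIV)"
      using IH unfolding F_def has_field_derivative_def by simp
    have fy: "((\<lambda>t2. F t1 t2) has_derivative blinfun_apply (blinfun_mult_right (P (t1,t2)))) (at t2 within UNIV)"
      for t1 t2
      using partial_shift[OF g, of "x + t1 *\<^sub>R v'" a t2]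
      unfolding F_def P_def has_field_derivative_def by (simp add: mult.commute)
    have cP: "continuous_on UNIV P"
    proof -
      have "continuous_on UNIV (partial a g)" using smooth_cont[OF smooth_partial[OF g]] .
      moreover have "continuous_on UNIV (\<lambda>(t1::real,t2::real). x + t1 *\<^sub>R v' + t2 *\<^sub>R ?ea)"
        unfolding case_prod_unfold by (intro continuous_intros)
      ultimately show ?thesis unfolding P_def
        using continuous_on_compose2[of UNIV "partial a g" UNIV "\<lambda>(t1::real,t2::real). x + t1 *\<^sub>R v' + t2 *\<^sub>R ?ea"]
        by (simp add: case_prod_unfold)
    qed
    have "continuous (at (0,0) within UNIV \<times> UNIV) (\<lambda>(t1,t2). blinfun_mult_right (P (t1,t2)))"
    proof -
      have "isCont P (0,0)" using cP by (simp add: continuous_on_eq_continuous_at)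
      hence "isCont (\<lambda>p. blinfun_mult_right (P p)) (0,0)"
        by (intro continuous_intros)
      thus ?thesis by (simp add: case_prod_unfold)
    qed
    from has_derivative_partialsI[OF fx fy this]
    have D2: "((\<lambda>(t1, t2). F t1 t2) has_derivative (\<lambda>(tx, ty). Dv * tx + P (0,0) * ty)) (at (0, 0))"
      by simp
    have Dp: "((\<lambda>t::real. (t, v$a * t)) has_derivative (\<lambda>h. (h, v$a * h))) (at 0)"
      by (intro derivative_eq_intros) auto
    have "(((\<lambda>(t1, t2). F t1 t2) \<circ> (\<lambda>t::real. (t, v$a * t))) has_derivative
        ((\<lambda>(tx, ty). Dv * tx + P (0,0) * ty) \<circ> (\<lambda>h. (h, v$a * h)))) (at 0)"
      using diff_chain_at[OF Dp] D2 by simp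
    moreover have "(\<lambda>(t1, t2). F t1 t2) \<circ> (\<lambda>t::real. (t, v$a * t)) = (\<lambda>t. g (x + t *\<^sub>R v))"
    proof
      fix t :: real
      have "x + t *\<^sub>R v' + (v$a * t) *\<^sub>R ?ea = x + t *\<^sub>R v"
        unfolding v'_def by (simp add: algebra_simps)
      thus "((\<lambda>(t1, t2). F t1 t2) \<circ> (\<lambda>t::real. (t, v$a * t))) t = g (x + t *\<^sub>R v)"
        by (simp add: F_def add.assoc)
    qed
    moreover have "(\<lambda>(tx, ty). Dv * tx + P (0,0) * ty) \<circ> (\<lambda>h. (h, v$a * h)) = (*) (\<Sum>i\<in>insert a S. v$i * partial i g x)"
    proof
      fix h :: real
      have "Dv = (\<Sum>i\<in>S. v$i * partial i g x)"
        unfolding Dv_def using insert.hyps(2) by (intro sum.cong) (auto simp: v'c)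
      thus "((\<lambda>(tx, ty). Dv * tx + P (0,0) * ty) \<circ> (\<lambda>h. (h, v$a * h))) h = (\<Sum>i\<in>insert a S. v$i * partial i g x) * h"
        using insert.hyps by (simp add: P_def algebra_simps)
    qed
    ultimately show "((\<lambda>t. g (x + t *\<^sub>R v)) has_real_derivative (\<Sum>i\<in>insert a S. v$i * partial i g x)) (at 0)"
      unfolding has_field_derivative_def by simp
  qed
qed

lemma chain_rule:
  assumes g: "smooth g"
  shows "((\<lambda>t. g (x + t *\<^sub>R v)) has_real_derivative (\<Sum>i\<in>UNIV. v$i * partial i g (x + t0 *\<^sub>R v))) (at t0)"
proof -
  have "((\<lambda>t. g ((x + t0 *\<^sub>R v) + t *\<^sub>R v)) has_real_derivative (\<Sum>i\<in>UNIV. v$i * partial i g (x + t0 *\<^sub>R v))) (at 0)"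
    using chain_S[OF g, of UNIV] by simp
  hence "((\<lambda>t. g (x + (t + t0) *\<^sub>R v)) has_real_derivative (\<Sum>i\<in>UNIV. v$i * partial i g (x + t0 *\<^sub>R v))) (at 0)"
    by (simp add: algebra_simps)
  thus ?thesis using DERIV_shift[of "\<lambda>t. g (x + t *\<^sub>R v)" _ 0 t0] by simp
qed



fun Tm :: "(real^'n) list \<Rightarrow> (real^'n \<Rightarrow> real) \<Rightarrow> real^'n \<Rightarrow> real" where
  "Tm [] g y = g y"
| "Tm (w # ws) g y = (\<Sum>i\<in>UNIV. w$i * Tm ws (partial i g) y)"

lemma Tm_deriv:
  assumes "smooth g"
  shows "((\<lambda>t. Tm (replicate k v) g (x + t *\<^sub>R v)) has_real_derivative Tm (replicate (Suc k) v) g (x + t *\<^sub>R v)) (at t)"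
  using assms
proof (induction k arbitrary: g)
  case 0
  then show ?case using chain_rule[OF 0, of x v t] by simp
next
  case (Suc k)
  have "((\<lambda>t. \<Sum>i\<in>UNIV. v$i * Tm (replicate k v) (partial i g) (x + t *\<^sub>R v)) has_real_derivative
        (\<Sum>i\<in>UNIV. v$i * Tm (replicate (Suc k) v) (partial i g) (x + t *\<^sub>R v))) (at t)"
    by (intro DERIV_sum DERIV_cmult Suc.IH smooth_partial Suc.prems)
  thus ?case by simp
qed

lemma dir_deriv_Tm:
  assumes "smooth g"
  shows "dir_deriv_k k g v x = Tm (replicate k v) g x"
proof -
  have "(deriv^^k) (\<lambda>t. g (x + t *\<^sub>R v)) = (\<lambda>t. Tm (replicate k v) g (x + t *\<^sub>R v))"
  proof (induction k)
    case 0
    then show ?case by simp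
  next
    case (Suc k)
    have "(deriv^^Suc k) (\<lambda>t. g (x + t *\<^sub>R v)) = deriv ((deriv^^k) (\<lambda>t. g (x + t *\<^sub>R v)))"
      by simp
    also have "\<dots> = deriv (\<lambda>t. Tm (replicate k v) g (x + t *\<^sub>R v))" by (simp only: Suc.IH)
    also have "\<dots> = (\<lambda>t. Tm (replicate (Suc k) v) g (x + t *\<^sub>R v))"
      by (rule ext, rule DERIV_imp_deriv, rule Tm_deriv[OF assms])
    finally show ?case .
  qed
  thus ?thesis unfolding dir_deriv_k_def by simp
qed

lemma Tm_add: "Tm (pre @ (a + b) # post) g y = Tm (pre @ a # post) g y + Tm (pre @ b # post) g y"
  by (induction pre arbitrary: g) (simp_all add: sum.distrib algebra_simps)

lemma Tm_scale: "Tm (pre @ (c *\<^sub>R a) # post) g y = c * Tm (pre @ a # post) g y"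
  by (induction pre arbitrary: g) (simp_all add: sum_distrib_left algebra_simps)

lemma Tm_swap:
  assumes "smooth g"
  shows "Tm (pre @ a # b # post) g y = Tm (pre @ b # a # post) g y"
  using assms
proof (induction pre arbitrary: g)
  case Nil
  have "Tm (a # b # post) g y = (\<Sum>i\<in>UNIV. \<Sum>j\<in>UNIV. a$i * b$j * Tm post (partial j (partial i g)) y)"
    by (simp add: sum_distrib_left algebra_simps)
  also have "\<dots> = (\<Sum>j\<in>UNIV. \<Sum>i\<in>UNIV. a$i * b$j * Tm post (partial i (partial j g)) y)"
    by (subst sum.swap) (simp add: clairaut[OF Nil])
  also have "\<dots> = Tm (b # a # post) g y"
    by (simp add: sum_distrib_left algebra_simps)
  finally show ?case by simp
next
  case (Cons p pre)
  then show ?case by (simp add: smooth_partial)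
qed

lemma Tm_move:
  assumes "smooth g"
  shows "Tm (pre @ a # l) g y = Tm (pre @ l @ [a]) g y"
proof (induction l arbitrary: pre)
  case Nil
  then show ?case by simp
next
  case (Cons b l)
  have "Tm (pre @ a # b # l) g y = Tm (pre @ b # a # l) g y" by (rule Tm_swap[OF assms])
  also have "\<dots> = Tm ((pre @ [b]) @ a # l) g y" by simp
  also have "\<dots> = Tm ((pre @ [b]) @ l @ [a]) g y" by (rule Cons.IH)
  finally show ?case by simp
qed

lemma Tm_rep_scale: "Tm (replicate k (c *\<^sub>R v)) g y = c^k * Tm (replicate k v) g y"
  by (induction k arbitrary: g) (simp_all add: sum_distrib_left algebra_simps)

lemma Tm_map_scale: "Tm (map ((*\<^sub>R) s) ws) g y = s ^ length ws * Tm ws g y"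
  by (induction ws arbitrary: g) (simp_all add: sum_distrib_left algebra_simps)

lemma sum_axis: "(\<Sum>j\<in>UNIV. axis i (1::real) $ j * F j) = F i"
proof -
  have "(\<Sum>j\<in>UNIV. axis i (1::real) $ j * F j) = (\<Sum>j\<in>UNIV. if j = i then F j else 0)"
    by (intro sum.cong) (auto simp: axis_def)
  thus ?thesis by simp
qed

lemma Tm_axis: "Tm (map (\<lambda>i. axis i 1) is) g y = iter_partial (rev is) g y"
proof (induction "is" arbitrary: g)
  case Nil
  then show ?case by simp
next
  case (Cons i "is")
  have "Tm (map (\<lambda>i. axis i 1) (i # is)) g y = Tm (map (\<lambda>i. axis i 1) is) (partial i g) y"
    by (simp add: sum_axis)
  also have "\<dots> = iter_partial (rev is) (partial i g) y" by (rule Cons.IH)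
  also have "\<dots> = iter_partial (rev (i # is)) g y" by (simp add: iter_partial_append)
  finally show ?case .
qed



lemma pascal_sum:
  fixes X :: "nat \<Rightarrow> real"
  shows "(\<Sum>j\<le>Suc n. of_nat (Suc n choose j) * X j) =
         (\<Sum>j\<le>n. of_nat (n choose j) * X j) + (\<Sum>j\<le>n. of_nat (n choose j) * X (Suc j))"
proof -
  have "(\<Sum>j\<le>Suc n. of_nat (Suc n choose j) * X j) = X 0 + (\<Sum>j\<le>n. of_nat (Suc n choose Suc j) * X (Suc j))"
    by (subst sum.atMost_Suc_shift) simp
  also have "\<dots> = X 0 + (\<Sum>j\<le>n. of_nat (n choose Suc j) * X (Suc j)) + (\<Sum>j\<le>n. of_nat (n choose j) * X (Suc j))"
    by (simp add: sum.distrib algebra_simps)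
  also have "X 0 + (\<Sum>j\<le>n. of_nat (n choose Suc j) * X (Suc j)) = (\<Sum>j\<le>Suc n. of_nat (n choose j) * X j)"
    by (subst sum.atMost_Suc_shift) simp
  also have "\<dots> = (\<Sum>j\<le>n. of_nat (n choose j) * X j)"
    by simp
  finally show ?thesis .
qed

lemma Tm_binom:
  assumes g: "smooth g"
  shows "Tm (Fs @ replicate n (u + w)) g y =
     (\<Sum>j\<le>n. of_nat (n choose j) * Tm (Fs @ replicate j w @ replicate (n - j) u) g y)"
proof (induction n arbitrary: Fs)
  case 0
  then show ?case by simp
next
  case (Suc n)
  define X where "X j = Tm (Fs @ replicate j w @ replicate (Suc n - j) u) g y" for j
  have "Tm (Fs @ replicate (Suc n) (u + w)) g y
      = Tm ((Fs @ [u]) @ replicate n (u + w)) g y + Tm ((Fs @ [w]) @ replicate n (u + w)) g y"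
    using Tm_add[of Fs u w "replicate n (u + w)" g y] by simp
  also have "\<dots> = (\<Sum>j\<le>n. of_nat (n choose j) * Tm ((Fs @ [u]) @ replicate j w @ replicate (n - j) u) g y)
       + (\<Sum>j\<le>n. of_nat (n choose j) * Tm ((Fs @ [w]) @ replicate j w @ replicate (n - j) u) g y)"
    by (simp only: Suc.IH)
  also have "(\<Sum>j\<le>n. of_nat (n choose j) * Tm ((Fs @ [u]) @ replicate j w @ replicate (n - j) u) g y)
      = (\<Sum>j\<le>n. of_nat (n choose j) * X j)"
  proof (intro sum.cong refl)
    fix j assume "j \<in> {..n}"
    hence j: "j \<le> n" by simp
    have "Tm ((Fs @ [u]) @ replicate j w @ replicate (n - j) u) g y
        = Tm (Fs @ u # (replicate j w @ replicate (n - j) u)) g y" by simp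
    also have "\<dots> = Tm (Fs @ (replicate j w @ replicate (n - j) u) @ [u]) g y"
      by (rule Tm_move[OF g])
    also have "\<dots> = X j"
      unfolding X_def using j by (simp add: Suc_diff_le replicate_append_same)
    finally show "of_nat (n choose j) * Tm ((Fs @ [u]) @ replicate j w @ replicate (n - j) u) g y
        = of_nat (n choose j) * X j" by simp
  qed
  also have "(\<Sum>j\<le>n. of_nat (n choose j) * Tm ((Fs @ [w]) @ replicate j w @ replicate (n - j) u) g y)
      = (\<Sum>j\<le>n. of_nat (n choose j) * X (Suc j))"
    unfolding X_def by simp
  also have "(\<Sum>j\<le>n. of_nat (n choose j) * X j) + (\<Sum>j\<le>n. of_nat (n choose j) * X (Suc j))
      = (\<Sum>j\<le>Suc n. of_nat (Suc n choose j) * X j)"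
    by (rule pascal_sum[symmetric])
  finally show ?case unfolding X_def .
qed

lemma Tm_delta:
  assumes g: "smooth g"
  shows "Tm (Fs @ replicate n (u + w)) g y - Tm (Fs @ replicate n u) g y =
     (\<Sum>j\<in>{1..n}. of_nat (n choose j) * Tm ((Fs @ replicate j w) @ replicate (n - j) u) g y)"
proof -
  have "(\<Sum>j\<le>n. of_nat (n choose j) * Tm (Fs @ replicate j w @ replicate (n - j) u) g y)
      = Tm (Fs @ replicate n u) g y + (\<Sum>j\<in>{1..n}. of_nat (n choose j) * Tm ((Fs @ replicate j w) @ replicate (n - j) u) g y)"
    by (simp add: atMost_atLeast0 sum.atLeast_Suc_atMost)
  thus ?thesis using Tm_binom[OF g] by simp
qed

fun D :: "(real^'n) list \<Rightarrow> (real^'n \<Rightarrow> real) \<Rightarrow> real^'n \<Rightarrow> real" where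
  "D [] h u = h u"
| "D (w # ws) h u = D ws h (u + w) - D ws h u"

lemma D_diff: "D ws (\<lambda>u. h1 u - h2 u) u = D ws h1 u - D ws h2 u"
  by (induction ws arbitrary: u) simp_all

lemma D_shift: "D ws (\<lambda>u. h (u + w)) u = D ws h (u + w)"
  by (induction ws arbitrary: u) (simp_all add: add_ac)

lemma D_Cons': "D (w # ws) h u = D ws (\<lambda>u. h (u + w) - h u) u"
  by (simp add: D_diff D_shift)

lemma D_sum: "D ws (\<lambda>u. \<Sum>j\<in>J. H j u) u = (\<Sum>j\<in>J. D ws (H j) u)"
  by (induction ws arbitrary: u) (simp_all add: sum_subtractf)

lemma D_cmult: "D ws (\<lambda>u. c * h u) u = c * D ws h u"
  by (induction ws arbitrary: u) (simp_all add: algebra_simps)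

lemma D_cong: "(\<And>u. h1 u = h2 u) \<Longrightarrow> D ws h1 u = D ws h2 u"
  by (metis ext)

lemma polar:
  assumes g: "smooth g"
  shows "n \<le> length ws \<Longrightarrow> D ws (\<lambda>u. Tm (Fs @ replicate n u) g y) u =
     (if n = length ws then fact n * Tm (Fs @ ws) g y else 0)"
proof (induction ws arbitrary: n Fs u)
  case Nil
  then show ?case by simp
next
  case (Cons w ws)
  have "D (w # ws) (\<lambda>u. Tm (Fs @ replicate n u) g y) u
      = D ws (\<lambda>u. \<Sum>j\<in>{1..n}. of_nat (n choose j) * Tm ((Fs @ replicate j w) @ replicate (n - j) u) g y) u"
    unfolding D_Cons' by (rule D_cong) (rule Tm_delta[OF g])
  also have "\<dots> = (\<Sum>j\<in>{1..n}. of_nat (n choose j) * D ws (\<lambda>u. Tm ((Fs @ replicate j w) @ replicate (n - j) u) g y) u)"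
    by (simp add: D_sum D_cmult)
  also have "\<dots> = (\<Sum>j\<in>{1..n}. of_nat (n choose j) *
       (if n - j = length ws then fact (n - j) * Tm ((Fs @ replicate j w) @ ws) g y else 0))"
  proof (intro sum.cong refl)
    fix j assume j: "j \<in> {1..n}"
    have nj: "n - j \<le> length ws" using j Cons.prems by auto
    show "of_nat (n choose j) * D ws (\<lambda>u. Tm ((Fs @ replicate j w) @ replicate (n - j) u) g y) u =
      of_nat (n choose j) * (if n - j = length ws then fact (n - j) * Tm ((Fs @ replicate j w) @ ws) g y else 0)"
      using Cons.IH[OF nj, of "Fs @ replicate j w" u] by simp
  qed
  also have "\<dots> = (\<Sum>j\<in>{1..n}. if j = 1 \<and> n = Suc (length ws) then
        of_nat n * fact (length ws) * Tm (Fs @ w # ws) g y else 0)"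
  proof (intro sum.cong refl)
    fix j assume j: "j \<in> {1..n}"
    show "of_nat (n choose j) *
       (if n - j = length ws then fact (n - j) * Tm ((Fs @ replicate j w) @ ws) g y else 0) =
       (if j = 1 \<and> n = Suc (length ws) then
        of_nat n * fact (length ws) * Tm (Fs @ w # ws) g y else 0)"
    proof (cases "j = 1 \<and> n = Suc (length ws)")
      case True
      then show ?thesis by simp
    next
      case False
      have "n - j \<noteq> length ws" using False j Cons.prems by auto
      then show ?thesis using False by (simp only: if_False if_not_P)
    qed
  qed
  also have "\<dots> = (if n = length (w # ws) then fact n * Tm (Fs @ w # ws) g y else 0)"
  proof (cases "n = Suc (length ws)")
    case True
    have "(\<Sum>j\<in>{1..n}. if j = 1 \<and> n = Suc (length ws) then
        of_nat n * fact (length ws) * Tm (Fs @ w # ws) g y else 0)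
        = (\<Sum>j\<in>{1..n}. if j = 1 then of_nat n * fact (length ws) * Tm (Fs @ w # ws) g y else 0)"
      using True by simp
    also have "\<dots> = of_nat n * fact (length ws) * Tm (Fs @ w # ws) g y"
      using True by (simp only: sum.delta[OF finite_atLeastAtMost]) simp
    finally show ?thesis using True by (simp add: fact_Suc)
  next
    case False
    then show ?thesis by simp
  qed
  finally show ?case .
qed

lemma D_bound:
  assumes "\<forall>u'. norm (u' - u) \<le> sum_list (map norm ws) \<longrightarrow> \<bar>h u'\<bar> \<le> B"
  shows "\<bar>D ws h u\<bar> \<le> 2 ^ length ws * B"
  using assms
proof (induction ws arbitrary: u)
  case Nil
  then show ?case by simp
next
  case (Cons w ws)
  have a: "\<bar>D ws h (u + w)\<bar> \<le> 2 ^ length ws * B"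
  proof (rule Cons.IH, intro allI impI)
    fix u' assume "norm (u' - (u + w)) \<le> sum_list (map norm ws)"
    moreover have "norm (u' - u) \<le> norm (u' - (u + w)) + norm w"
      using norm_triangle_ineq[of "u' - (u + w)" w] by (simp add: algebra_simps)
    ultimately show "\<bar>h u'\<bar> \<le> B" using Cons.prems by auto
  qed
  have b: "\<bar>D ws h u\<bar> \<le> 2 ^ length ws * B"
  proof (rule Cons.IH, intro allI impI)
    fix u' assume "norm (u' - u) \<le> sum_list (map norm ws)"
    hence "norm (u' - u) \<le> norm w + sum_list (map norm ws)" using norm_ge_zero[of w] by linarith
    thus "\<bar>h u'\<bar> \<le> B" using Cons.prems by auto
  qed
  show ?case using a b by simp
qed



lemma ip_swap:
  assumes "smooth g"
  shows "iter_partial (pre @ a # b # post) g = iter_partial (pre @ b # a # post) g"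
  using clairaut[OF smooth_iter[OF assms, of post], of a b]
  by (simp add: iter_partial_append)

lemma ip_move:
  assumes "smooth g"
  shows "iter_partial (pre @ a # l) g = iter_partial (pre @ l @ [a]) g"
proof (induction l arbitrary: pre)
  case Nil
  then show ?case by simp
next
  case (Cons b l)
  have "iter_partial (pre @ a # b # l) g = iter_partial ((pre @ [b]) @ a # l) g"
    using ip_swap[OF assms] by simp
  also have "\<dots> = iter_partial ((pre @ [b]) @ l @ [a]) g" by (rule Cons.IH)
  finally show ?case by simp
qed

lemma ip_perm:
  assumes "smooth g"
  shows "mset l = mset l' \<Longrightarrow> iter_partial (l @ suf) g = iter_partial (l' @ suf) g"
proof (induction l arbitrary: l' suf)
  case Nil
  then show ?case by simp
next
  case (Cons a l)
  have "a \<in> set l'" using Cons.prems by (metis list.set_intros(1) set_mset_mset)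
  then obtain p s where l': "l' = p @ a # s" by (meson split_list)
  have ml: "mset l = mset (p @ s)" using Cons.prems l' by simp
  have "iter_partial ((a # l) @ suf) g = iter_partial ([] @ a # (l @ suf)) g" by simp
  also have "\<dots> = iter_partial ([] @ (l @ suf) @ [a]) g" by (rule ip_move[OF assms])
  also have "\<dots> = iter_partial (l @ suf @ [a]) g" by simp
  also have "\<dots> = iter_partial ((p @ s) @ suf @ [a]) g" by (rule Cons.IH[OF ml])
  also have "\<dots> = iter_partial (p @ (s @ suf) @ [a]) g" by simp
  also have "\<dots> = iter_partial (p @ a # (s @ suf)) g" by (rule ip_move[OF assms, symmetric])
  finally show ?case using l' by simp
qed

lemma sum_count_list: "(\<Sum>i\<in>(UNIV::'n::finite set). count_list l i) = length l"
proof (induction l)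
  case Nil
  then show ?case by simp
next
  case (Cons a l)
  have "(\<Sum>i\<in>(UNIV::'n set). count_list (a # l) i) = (\<Sum>i\<in>UNIV. count_list l i + (if a = i then 1 else 0))"
    by (intro sum.cong) auto
  also have "\<dots> = length l + 1" by (simp add: sum.distrib Cons.IH)
  finally show ?case by simp
qed

lemma ex_count_list: "\<exists>l. \<forall>i. count_list l i = (\<alpha> :: 'n::finite \<Rightarrow> nat) i"
proof -
  define M where "M = (\<Sum>j\<in>(UNIV::'n set). replicate_mset (\<alpha> j) j)"
  obtain l where l: "mset l = M" using ex_mset by blast
  have "count M i = \<alpha> i" for i
  proof -
    have "count M i = (\<Sum>j\<in>UNIV. count (replicate_mset (\<alpha> j) j) i)"
      unfolding M_def by (simp add: count_sum)
    also have "\<dots> = (\<Sum>j\<in>UNIV. if j = i then \<alpha> j else 0)"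
      by (intro sum.cong) auto
    finally show ?thesis by simp
  qed
  thus ?thesis using l by (metis count_mset)
qed

lemma partial_alpha_some:
  "\<forall>i. count_list (SOME is. \<forall>i. count_list is i = \<alpha> i) i = (\<alpha> :: 'n::finite \<Rightarrow> nat) i"
  using someI_ex[OF ex_count_list[of \<alpha>]] .

lemma mi_abs_count: "mi_abs (count_list l) = length l"
  unfolding mi_abs_def by (rule sum_count_list)

lemma partial_alpha_count:
  assumes "smooth g"
  shows "partial_alpha (count_list l) g = iter_partial l g"
proof -
  let ?l = "SOME is. \<forall>i. count_list is i = count_list l i"
  have "\<forall>i. count_list ?l i = count_list l i" by (rule partial_alpha_some)
  hence "mset ?l = mset l" by (intro multiset_eqI) (simp add: count_mset)
  hence "iter_partial (?l @ []) g = iter_partial (l @ []) g" by (rule ip_perm[OF assms])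
  thus ?thesis unfolding partial_alpha_def by simp
qed

lemma Tm_bound_ip:
  "(\<forall>l. length l = k \<longrightarrow> \<bar>iter_partial l g x\<bar> \<le> B) \<Longrightarrow>
    \<bar>Tm (replicate k v) g x\<bar> \<le> (\<Sum>i\<in>UNIV. \<bar>v$i\<bar>) ^ k * B"
proof (induction k arbitrary: g)
  case 0
  then show ?case using 0[rule_format, of "[]"] by simp
next
  case (Suc k)
  have IH: "\<bar>Tm (replicate k v) (partial i g) x\<bar> \<le> (\<Sum>i\<in>UNIV. \<bar>v$i\<bar>) ^ k * B" for i
  proof (rule Suc.IH, intro allI impI)
    fix l :: "'a list" assume "length l = k"
    thus "\<bar>iter_partial l (partial i g) x\<bar> \<le> B"
      using Suc.prems[rule_format, of "l @ [i]"] by (simp add: iter_partial_append)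
  qed
  have "\<bar>Tm (replicate (Suc k) v) g x\<bar> = \<bar>\<Sum>i\<in>UNIV. v$i * Tm (replicate k v) (partial i g) x\<bar>" by simp
  also have "\<dots> \<le> (\<Sum>i\<in>UNIV. \<bar>v$i\<bar> * \<bar>Tm (replicate k v) (partial i g) x\<bar>)"
    by (rule order_trans[OF sum_abs]) (simp add: abs_mult)
  also have "\<dots> \<le> (\<Sum>i\<in>UNIV. \<bar>v$i\<bar> * ((\<Sum>i\<in>UNIV. \<bar>v$i\<bar>) ^ k * B))"
    by (intro sum_mono mult_left_mono IH) simp
  also have "\<dots> = (\<Sum>i\<in>UNIV. \<bar>v$i\<bar>) ^ Suc k * B"
    by (simp add: sum_distrib_right[symmetric])
  finally show ?case .
qed



lemma c31:
  fixes g :: "real^'n \<Rightarrow> real"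
  assumes g: "smooth g" and N: "\<forall>k. N k > 0" and c3: "cond3 g L N C \<rho>"
  shows "cond1 g L N C (real CARD('n) * \<rho>)"
proof -
  have C: "C > 0" and r: "\<rho> > 0" and b3: "\<forall>x\<in>L. \<forall>\<alpha>. \<bar>partial_alpha \<alpha> g x\<bar> \<le> C * \<rho> ^ mi_abs \<alpha> * fact (mi_abs \<alpha>) * N (mi_abs \<alpha>)"
    using c3 unfolding cond3_def by auto
  have cardpos: "real CARD('n) > 0" by simp
  have "\<bar>dir_deriv_k k g v x\<bar> \<le> C * (real CARD('n) * \<rho>) ^ k * fact k * N k"
    if x: "x \<in> L" and v: "v \<in> sphere 0 1" for k x v
  proof -
    let ?B = "C * \<rho> ^ k * fact k * N k"
    have B0: "?B \<ge> 0" using C r N by (simp add: less_imp_le)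
    have "\<forall>l. length l = k \<longrightarrow> \<bar>iter_partial l g x\<bar> \<le> ?B"
    proof (intro allI impI)
      fix l :: "'n list" assume l: "length l = k"
      have "\<bar>partial_alpha (count_list l) g x\<bar> \<le> ?B"
        using b3 x l by (metis mi_abs_count)
      thus "\<bar>iter_partial l g x\<bar> \<le> ?B" by (simp add: partial_alpha_count[OF g])
    qed
    hence "\<bar>Tm (replicate k v) g x\<bar> \<le> (\<Sum>i\<in>UNIV. \<bar>v$i\<bar>) ^ k * ?B" by (rule Tm_bound_ip)
    also have "\<dots> \<le> real CARD('n) ^ k * ?B"
    proof (intro mult_right_mono B0 power_mono)
      have "(\<Sum>i\<in>UNIV. \<bar>v$i\<bar>) \<le> (\<Sum>i\<in>(UNIV::'n set). 1)"
        using v by (intro sum_mono) (metis component_le_norm_cart mem_sphere_0)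
      thus "(\<Sum>i\<in>UNIV. \<bar>v$i\<bar>) \<le> real CARD('n)" by simp
    qed simp
    finally show ?thesis by (simp add: dir_deriv_Tm[OF g] power_mult_distrib algebra_simps)
  qed
  thus ?thesis unfolding cond1_def using C r cardpos by simp
qed

lemma kk_fact: "real k ^ k \<le> exp (real k) * fact k"
proof -
  have "(\<lambda>n. real k ^ n /\<^sub>R fact n) sums exp (real k)" by (rule exp_converges)
  hence "sum (\<lambda>n. real k ^ n /\<^sub>R fact n) {k} \<le> suminf (\<lambda>n. real k ^ n /\<^sub>R fact n)"
    by (intro sum_le_suminf) (auto simp: sums_summable)
  also have "\<dots> = exp (real k)" using \<open>_ sums _\<close> by (rule sums_unique[symmetric])
  finally have "sum (\<lambda>n. real k ^ n /\<^sub>R fact n) {k} \<le> exp (real k)" .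
  hence "real k ^ k / fact k \<le> exp (real k)" by (simp add: divide_inverse mult.commute)
  thus ?thesis by (simp add: divide_le_eq mult.commute del: of_nat_fact)
qed

definition dlt :: "real \<Rightarrow> real" where "dlt r = min (r/4) (1/2)"

definition rho23 :: "real \<Rightarrow> real \<Rightarrow> real" where
  "rho23 r \<rho> = 2 * exp 1 * (1 + dlt r) * \<rho> / dlt r"



lemma c23:
  fixes g :: "real^'n \<Rightarrow> real"
  assumes g: "smooth g" and N: "\<forall>k. N k > 0" and c2: "cond2 g L N v0 r C \<rho>"
  shows "cond3 g L N C (rho23 r \<rho>)"
proof -
  have v0: "norm v0 = 1" and r: "r > 0" and C: "C > 0" and rh: "\<rho> > 0"
    and b2: "\<forall>k. \<forall>x\<in>L. \<forall>v\<in>ball v0 r \<inter> sphere 0 1. \<bar>dir_deriv_k k g v x\<bar> \<le> C * \<rho> ^ k * fact k * N k"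
    using c2 unfolding cond2_def by auto
  define \<delta> where "\<delta> = dlt r"
  have d0: "\<delta> > 0" and d1: "\<delta> \<le> 1/2" and d2: "2 * \<delta> < r"
    using r by (auto simp: \<delta>_def dlt_def)
  have main: "\<bar>iter_partial l g x\<bar> \<le> C * rho23 r \<rho> ^ length l * fact (length l) * N (length l)"
    if x: "x \<in> L" for l x
  proof -
    define k where "k = length l"
    define B where "B = C * \<rho> ^ k * fact k * N k"
    have B0: "B \<ge> 0" using C rh N by (simp add: B_def less_imp_le)
    have hQ: "\<bar>Tm (replicate k u') g x\<bar> \<le> (1 + \<delta>) ^ k * B" if u': "norm (u' - v0) \<le> \<delta>" for u'
    proof -
      define t where "t = norm u'"
      have "\<bar>t - 1\<bar> \<le> \<delta>" using norm_triangle_ineq3[of u' v0] u' v0 by (simp add: t_def)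
      hence t1: "t \<ge> 1/2" "t \<le> 1 + \<delta>" "\<bar>1 - t\<bar> \<le> \<delta>" using d1 by auto
      define w where "w = (1/t) *\<^sub>R u'"
      have u0: "u' \<noteq> 0" using t1 by (auto simp: t_def)
      have nw: "norm w = 1" using u0 by (simp add: w_def t_def)
      have uw: "u' = t *\<^sub>R w" using t1 by (simp add: w_def)
      have "norm (u' - w) = norm ((t - 1) *\<^sub>R w)" by (simp add: uw algebra_simps)
      also have "\<dots> = \<bar>1 - t\<bar>" using nw by simp
      finally have "norm (u' - w) \<le> \<delta>" using t1 by simp
      hence "norm (v0 - w) \<le> 2 * \<delta>"
        using u' norm_triangle_ineq[of "v0 - u'" "u' - w"] by (simp add: norm_minus_commute)
      hence "w \<in> ball v0 r \<inter> sphere 0 1" using d2 nw by (simp add: dist_norm)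
      hence bw: "\<bar>Tm (replicate k w) g x\<bar> \<le> B"
        using b2 x by (simp add: B_def dir_deriv_Tm[OF g, symmetric])
      have "\<bar>Tm (replicate k u') g x\<bar> = t ^ k * \<bar>Tm (replicate k w) g x\<bar>"
        using t1 by (simp add: uw Tm_rep_scale abs_mult)
      also have "\<dots> \<le> (1 + \<delta>) ^ k * B"
        using t1 bw B0 by (intro mult_mono power_mono) auto
      finally show ?thesis .
    qed
    show ?thesis
    proof (cases "k = 0")
      case True
      hence "l = []" by (simp add: k_def)
      thus ?thesis using hQ[of v0] True d0 by (simp add: B_def k_def)
    next
      case False
      hence kpos: "real k > 0" by simp
      define s where "s = \<delta> / real k"
      have s0: "s > 0" using d0 kpos by (simp add: s_def)
      define ws where "ws = map (\<lambda>i. s *\<^sub>R axis i (1::real)) (rev l)"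
      have lws: "length ws = k" by (simp add: ws_def k_def)
      have P1: "D ws (\<lambda>u. Tm ([] @ replicate k u) g x) v0 = fact k * Tm ([] @ ws) g x"
        using polar[OF g, of k ws "[]" x v0] lws by simp
      have P2: "Tm ws g x = s ^ k * iter_partial l g x"
      proof -
        have "ws = map ((*\<^sub>R) s) (map (\<lambda>i. axis i 1) (rev l))" by (simp add: ws_def)
        hence "Tm ws g x = s ^ k * Tm (map (\<lambda>i. axis i 1) (rev l)) g x"
          using Tm_map_scale[of s "map (\<lambda>i. axis i 1) (rev l)" g x] by (simp only: length_map length_rev k_def)
        thus ?thesis by (simp add: Tm_axis)
      qed
      have P3: "\<bar>D ws (\<lambda>u. Tm ([] @ replicate k u) g x) v0\<bar> \<le> 2 ^ k * ((1 + \<delta>) ^ k * B)"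
      proof -
        have "map norm ws = map (\<lambda>i. s) (rev l)" using s0 by (simp add: ws_def)
        hence "sum_list (map norm ws) = \<delta>" using kpos by (simp add: map_replicate_const sum_list_replicate s_def k_def)
        thus ?thesis using D_bound[of v0 ws "\<lambda>u. Tm ([] @ replicate k u) g x" "(1 + \<delta>) ^ k * B"] hQ lws
          by simp
      qed
      have "fact k * (s ^ k * \<bar>iter_partial l g x\<bar>) = \<bar>D ws (\<lambda>u. Tm ([] @ replicate k u) g x) v0\<bar>"
        using P1 P2 s0 by (simp add: abs_mult)
      also have "\<dots> \<le> 2 ^ k * ((1 + \<delta>) ^ k * B)" by (rule P3)
      also have "\<dots> = fact k * ((2 * (1 + \<delta>) * \<rho>) ^ k * C * N k)"
        unfolding B_def power_mult_distrib by (simp only: mult_ac)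
      finally have e1: "fact k * (s ^ k * \<bar>iter_partial l g x\<bar>) \<le> fact k * ((2 * (1 + \<delta>) * \<rho>) ^ k * C * N k)" .
      hence e2: "s ^ k * \<bar>iter_partial l g x\<bar> \<le> (2 * (1 + \<delta>) * \<rho>) ^ k * C * N k"
        by (simp del: of_nat_fact)
      have sk: "s ^ k * real k ^ k = \<delta> ^ k" using kpos by (simp add: s_def power_mult_distrib[symmetric])
      have "\<bar>iter_partial l g x\<bar> * \<delta> ^ k = (s ^ k * \<bar>iter_partial l g x\<bar>) * real k ^ k"
        by (simp add: sk[symmetric] algebra_simps)
      also have "\<dots> \<le> ((2 * (1 + \<delta>) * \<rho>) ^ k * C * N k) * real k ^ k"
        by (intro mult_right_mono e2) simp
      also have "\<dots> \<le> ((2 * (1 + \<delta>) * \<rho>) ^ k * C * N k) * (exp 1 ^ k * fact k)"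
      proof (intro mult_left_mono)
        show "real k ^ k \<le> exp 1 ^ k * fact k"
          using kk_fact[of k] by (simp add: exp_of_nat_mult[symmetric])
        show "0 \<le> (2 * (1 + \<delta>) * \<rho>) ^ k * C * N k" using d0 rh C N by (simp add: less_imp_le)
      qed
      also have "\<dots> = (C * rho23 r \<rho> ^ k * fact k * N k) * \<delta> ^ k"
      proof -
        have "rho23 r \<rho> * \<delta> = (2 * (1 + \<delta>) * \<rho>) * exp 1"
          using d0 by (simp add: rho23_def \<delta>_def[symmetric])
        hence "rho23 r \<rho> ^ k * \<delta> ^ k = (2 * (1 + \<delta>) * \<rho>) ^ k * exp 1 ^ k"
          by (metis power_mult_distrib)
        thus ?thesis by (simp only: mult_ac)
      qed
      finally have "\<bar>iter_partial l g x\<bar> * \<delta> ^ k \<le> (C * rho23 r \<rho> ^ k * fact k * N k) * \<delta> ^ k" .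
      hence "\<bar>iter_partial l g x\<bar> \<le> C * rho23 r \<rho> ^ k * fact k * N k"
        using d0 by (simp del: of_nat_fact)
      thus ?thesis by (simp add: k_def)
    qed
  qed
  have "\<bar>partial_alpha \<alpha> g x\<bar> \<le> C * rho23 r \<rho> ^ mi_abs \<alpha> * fact (mi_abs \<alpha>) * N (mi_abs \<alpha>)"
    if x: "x \<in> L" for x \<alpha>
  proof -
    let ?l = "SOME is. \<forall>i. count_list is i = \<alpha> i"
    have "\<forall>i. count_list ?l i = \<alpha> i" by (rule partial_alpha_some)
    hence "count_list ?l = \<alpha>" by blast
    hence len: "length ?l = mi_abs \<alpha>" using mi_abs_count[of ?l] by simp
    show ?thesis using main[OF x, of ?l] unfolding partial_alpha_def len .
  qed
  moreover have "rho23 r \<rho> > 0" using d0 rh by (simp add: rho23_def \<delta>_def[symmetric])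
  ultimately show ?thesis unfolding cond3_def using C by simp
qed



lemma c12:
  fixes g :: "real^'n \<Rightarrow> real"
  assumes "cond1 g L N C \<rho>"
  shows "cond2 g L N (axis undefined 1) 1 C \<rho>"
  using assms unfolding cond1_def cond2_def by (auto simp: norm_axis_1)

lemma c21:
  fixes g :: "real^'n \<Rightarrow> real"
  assumes "smooth g" "\<forall>k. N k > 0" "cond2 g L N v0 r C \<rho>"
  shows "cond1 g L N C (real CARD('n) * rho23 r \<rho>)"
  by (rule c31[OF assms(1,2) c23[OF assms]])

lemma c13:
  fixes g :: "real^'n \<Rightarrow> real"
  assumes "smooth g" "\<forall>k. N k > 0" "cond1 g L N C \<rho>"
  shows "cond3 g L N C (rho23 1 \<rho>)"
  by (rule c23[OF assms(1,2) c12[OF assms(3)]])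

theorem proposition7p2:
  fixes f :: "real^'n \<Rightarrow> real" and K :: "(real^'n) set" and M :: "nat \<Rightarrow> real"
  assumes "smooth f" and "compact K" and "\<forall>k. M k > 0"
  shows "((\<exists>C \<rho>. cond1 f K M C \<rho>) \<longleftrightarrow> (\<exists>v0 r C \<rho>. cond2 f K M v0 r C \<rho>))
       \<and> ((\<exists>C \<rho>. cond1 f K M C \<rho>) \<longleftrightarrow> (\<exists>C \<rho>. cond3 f K M C \<rho>))
       \<and> (\<exists>\<Phi>21 :: real \<Rightarrow> real \<Rightarrow> real \<Rightarrow> real \<times> real.
          \<exists>\<Phi>13 \<Phi>31 :: real \<Rightarrow> real \<Rightarrow> real \<times> real.
           (\<forall>(g :: real^'n \<Rightarrow> real) L N v0 r C \<rho>. smooth g \<longrightarrow> compact L \<longrightarrow> (\<forall>k. N k > 0) \<longrightarrow>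
               cond2 g L N v0 r C \<rho> \<longrightarrow> cond1 g L N (fst (\<Phi>21 r C \<rho>)) (snd (\<Phi>21 r C \<rho>)))
         \<and> (\<forall>(g :: real^'n \<Rightarrow> real) L N C \<rho>. smooth g \<longrightarrow> compact L \<longrightarrow> (\<forall>k. N k > 0) \<longrightarrow>
               cond1 g L N C \<rho> \<longrightarrow> cond3 g L N (fst (\<Phi>13 C \<rho>)) (snd (\<Phi>13 C \<rho>)))
         \<and> (\<forall>(g :: real^'n \<Rightarrow> real) L N C \<rho>. smooth g \<longrightarrow> compact L \<longrightarrow> (\<forall>k. N k > 0) \<longrightarrow>
               cond3 g L N C \<rho> \<longrightarrow> cond1 g L N (fst (\<Phi>31 C \<rho>)) (snd (\<Phi>31 C \<rho>))))"
proof (intro conjI)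
  show "(\<exists>C \<rho>. cond1 f K M C \<rho>) \<longleftrightarrow> (\<exists>v0 r C \<rho>. cond2 f K M v0 r C \<rho>)"
    using c12[of f K M] c21[OF assms(1,3)] by blast
  show "(\<exists>C \<rho>. cond1 f K M C \<rho>) \<longleftrightarrow> (\<exists>C \<rho>. cond3 f K M C \<rho>)"
    using c13[OF assms(1,3)] c31[OF assms(1,3)] by blast
  show "\<exists>\<Phi>21 :: real \<Rightarrow> real \<Rightarrow> real \<Rightarrow> real \<times> real.
          \<exists>\<Phi>13 \<Phi>31 :: real \<Rightarrow> real \<Rightarrow> real \<times> real.
           (\<forall>(g :: real^'n \<Rightarrow> real) L N v0 r C \<rho>. smooth g \<longrightarrow> compact L \<longrightarrow> (\<forall>k. N k > 0) \<longrightarrow>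
               cond2 g L N v0 r C \<rho> \<longrightarrow> cond1 g L N (fst (\<Phi>21 r C \<rho>)) (snd (\<Phi>21 r C \<rho>)))
         \<and> (\<forall>(g :: real^'n \<Rightarrow> real) L N C \<rho>. smooth g \<longrightarrow> compact L \<longrightarrow> (\<forall>k. N k > 0) \<longrightarrow>
               cond1 g L N C \<rho> \<longrightarrow> cond3 g L N (fst (\<Phi>13 C \<rho>)) (snd (\<Phi>13 C \<rho>)))
         \<and> (\<forall>(g :: real^'n \<Rightarrow> real) L N C \<rho>. smooth g \<longrightarrow> compact L \<longrightarrow> (\<forall>k. N k > 0) \<longrightarrow>
               cond3 g L N C \<rho> \<longrightarrow> cond1 g L N (fst (\<Phi>31 C \<rho>)) (snd (\<Phi>31 C \<rho>)))"
    apply (rule exI[of _ "\<lambda>r C \<rho>. (C, real CARD('n) * rho23 r \<rho>)"])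
    apply (rule exI[of _ "\<lambda>C \<rho>. (C, rho23 1 \<rho>)"])
    apply (rule exI[of _ "\<lambda>C \<rho>. (C, real CARD('n) * \<rho>)"])
    using c21 c13 c31 by auto
qed

end
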